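(* Let $\tau$ be a set of operation symbols and $X$ a set disjoint from $\tau$. Equip the set $T_\tau(X)$ of $\tau$-hyperterms over $X$ with the constants $\mathsf e_i^{\mathcal T}=\mathsf e_i$ ($i\ge 1$), $\sigma^{\mathcal T}=\sigma(\mathsf e_1,\mathsf e_2,\dots)$ ($\sigma\in\tau$), and operations $q_n^{\mathcal T}$ ($n\ge 0$) defined recursively by: $q_n^{\mathcal T}(\mathsf e_i,t_1,\dots,t_n)=t_i$ for $1\le i\le n$; $q_n^{\mathcal T}(\mathsf e_i,t_1,\dots,t_n)=\mathsf e_i$ for $i>n$; and for $w\in\tau\cup X$, $q_n^{\mathcal T}(w(t_1,\dots,t_k,\mathsf e_{k+1},\mathsf e_{k+2},\dots),\bar u)=w(q_n^{\mathcal T}(t_1,\bar u),\dots,q_n^{\mathcal T}(t_k,\bar u),q_n^{\mathcal T}(\mathsf e_{k+1},\bar u),q_n^{\mathcal T}(\mathsf e_{k+2},\bar u),\dots)$, where $\bar u=u_1,\dots,u_n$. Then $\mathcal T_\tau(X)=(T_\tau(X),q_n^{\mathcal T},\mathsf e_i^{\mathcal T},\sigma^{\mathcal T})$ is a clone $\tau$-algebra, and it is the free clone $\tau$-algebra over the set $X$ of generators (each $x\in X$ identified with $x(\mathsf e_1,\mathsf e_2,\dots)$) in the variety of all clone $\tau$-algebras: for every clone $\tau$-algebra $\mathcal C$ and every map $\alpha:X\to C$ there is a unique homomorphism $\mathcal T_\tau(X)\to\mathcal C$ extending $\alpha$. In particular, for $X=\emptyset$, $\mathcal T_\tau=\mathcal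 T_\tau(\emptyset)$ is initial in the class of clone $\tau$-algebras.
   Context: A clone $\tau$-algebra is an algebra $\mathcal C=(C,q_n^{\mathcal C},\mathsf e_i^{\mathcal C},\sigma^{\mathcal C})_{n\ge 0,i\ge1,\sigma\in\tau}$ where $\mathsf e_i^{\mathcal C},\sigma^{\mathcal C}\in C$ are constants and $q_n^{\mathcal C}$ is an $(n+1)$-ary operation, satisfying the identities: (C1) $q_n(\mathsf e_i,x_1,\dots,x_n)=x_i$ for $1\le i\le n$; (C2) $q_n(\mathsf e_j,x_1,\dots,x_n)=\mathsf e_j$ for $j>n$; (C3) $q_n(x,\mathsf e_1,\dots,\mathsf e_n)=x$; (C4) $q_n(x,y_1,\dots,y_n)=q_k(x,y_1,\dots,y_n,\mathsf e_{n+1},\dots,\mathsf e_k)$ for $k>n$; (C5) $q_n(q_n(x,y_1,\dots,y_n),z_1,\dots,z_n)=q_n(x,q_n(y_1,z_1,\dots,z_n),\dots,q_n(y_n,z_1,\dots,z_n))$. These form a variety. The set $T_\tau(X)$ of $\tau$-hyperterms over $X$ is the least set containing the symbols $\mathsf e_1,\mathsf e_2,\dots$ and containing the formal expression $w(t_1,\dots,t_n,\mathsf e_{n+1},\mathsf e_{n+2},\dots)$ whenever $w\in\tau\cup X$, $n\ge 0$ and $t_1,\dots,t_n\in T_\tau(X)$ (an infinite argument list which is eventually $\mathsf e_{k},\mathsf e_{k+1},\dots$ in positions $k$). *)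

theory Defs
  imports Main
begin

text \<open>The family of operations q_n (n >= 0), each of
arity n+1, is represented by a single function q :: 'a => 'a list => 'a, where
q x [y1,...,yn] stands for q_n(x,y1,...,yn).\<close>

definition clone_alg ::
  "'s set \<Rightarrow> 'a set \<Rightarrow> ('a \<Rightarrow> 'a list \<Rightarrow> 'a) \<Rightarrow> (nat \<Rightarrow> 'a) \<Rightarrow> ('s \<Rightarrow> 'a) \<Rightarrow> bool" where
  "clone_alg tau C q e sg \<longleftrightarrow>
     (\<forall>i\<ge>1. e i \<in> C) \<and> (\<forall>s\<in>tau. sg s \<in> C) \<and>
     (\<forall>x\<in>C. \<forall>ys\<in>lists C. q x ys \<in> C) \<and>
     \<comment> \<open>(C1)\<close>
     (\<forall>xs\<in>lists C. \<forall>i. 1 \<le> i \<and> i \<le> length xs \<longrightarrow> q (e i) xs = xs ! (i - 1)) \<and>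
     \<comment> \<open>(C2)\<close>
     (\<forall>xs\<in>lists C. \<forall>j. j > length xs \<longrightarrow> q (e j) xs = e j) \<and>
     \<comment> \<open>(C3)\<close>
     (\<forall>x\<in>C. \<forall>n. q x (map e [1..<n+1]) = x) \<and>
     \<comment> \<open>(C4)\<close>
     (\<forall>x\<in>C. \<forall>ys\<in>lists C. \<forall>k. k > length ys \<longrightarrow>
        q x ys = q x (ys @ map e [length ys + 1..<k+1])) \<and>
     \<comment> \<open>(C5)\<close>
     (\<forall>x\<in>C. \<forall>ys\<in>lists C. \<forall>zs\<in>lists C. length ys = length zs \<longrightarrow>
        q (q x ys) zs = q x (map (\<lambda>y. q y zs) ys))"

definition clone_hom ::
  "'s set \<Rightarrow> 'a set \<Rightarrow> ('a \<Rightarrow> 'a list \<Rightarrow> 'a) \<Rightarrow> (nat \<Rightarrow> 'a) \<Rightarrow> ('s \<Rightarrow> 'a)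
   \<Rightarrow> 'b set \<Rightarrow> ('b \<Rightarrow> 'b list \<Rightarrow> 'b) \<Rightarrow> (nat \<Rightarrow> 'b) \<Rightarrow> ('s \<Rightarrow> 'b) \<Rightarrow> ('a \<Rightarrow> 'b) \<Rightarrow> bool" where
  "clone_hom tau C q e sg D q' e' sg' h \<longleftrightarrow>
     (\<forall>x\<in>C. h x \<in> D) \<and>
     (\<forall>x\<in>C. \<forall>ys\<in>lists C. h (q x ys) = q' (h x) (map h ys)) \<and>
     (\<forall>i\<ge>1. h (e i) = e' i) \<and>
     (\<forall>s\<in>tau. h (sg s) = sg' s)"

text \<open>Var i (i >= 1) is the symbol e_i. Op w [t1,...,tk] is the hyperterm
w(t1,...,tk,e_{k+1},e_{k+2},...), with w : 's + 'x (Inl = operation symbol, Inr = element of X;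
the sum type makes tau and X disjoint). Since w(t1,...,tk,e_{k+1},...) = w(t1,...,tk,e_{k+1},e_{k+2},...)
as infinite expressions, we use the canonical representative: the list has no trailing entry
Var (its position).\<close>

datatype ('s, 'x) hterm = Var nat | Op "'s + 'x" "('s, 'x) hterm list"

fun hwf :: "'s set \<Rightarrow> 'x set \<Rightarrow> ('s, 'x) hterm \<Rightarrow> bool" where
  "hwf tau X (Var i) \<longleftrightarrow> 1 \<le> i"
| "hwf tau X (Op w ts) \<longleftrightarrow> w \<in> Inl ` tau \<union> Inr ` X \<and> (\<forall>t\<in>set ts. hwf tau X t) \<and>
     (ts \<noteq> [] \<longrightarrow> last ts \<noteq> Var (length ts))"

definition hterms :: "'s set \<Rightarrow> 'x set \<Rightarrow> ('s, 'x) hterm set" where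
  "hterms tau X = {t. hwf tau X t}"

function strip :: "('s, 'x) hterm list \<Rightarrow> ('s, 'x) hterm list" where
  "strip ts = (if ts \<noteq> [] \<and> last ts = Var (length ts) then strip (butlast ts) else ts)"
  by auto
termination by (relation "measure length") auto

declare strip.simps[simp del]

text \<open>q^T: q_n(e_i, u) = u_i (1<=i<=n), = e_i (i>n); and
q_n(w(t1..tk,e_{k+1},...), u) = w(q_n(t1,u),...,q_n(tk,u),q_n(e_{k+1},u),...);
the positions k+1..n give u_{k+1},...,u_n and the positions > n give e_j.\<close>
fun tq :: "('s, 'x) hterm \<Rightarrow> ('s, 'x) hterm list \<Rightarrow> ('s, 'x) hterm" where
  "tq (Var i) us = (if 1 \<le> i \<and> i \<le> length us then us ! (i - 1) else Var i)"
| "tq (Op w ts) us = Op w (strip (map (\<lambda>t. tq t us) ts @ drop (length ts) us))"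

definition te :: "nat \<Rightarrow> ('s, 'x) hterm" where "te i = Var i"

definition tsg :: "'s \<Rightarrow> ('s, 'x) hterm" where "tsg s = Op (Inl s) []"

definition tgen :: "'x \<Rightarrow> ('s, 'x) hterm" where "tgen x = Op (Inr x) []"

end

theory Submission
  imports Defs
begin

declare upt_Suc[simp del]

definition hext :: "('s,'x) hterm list \<Rightarrow> nat \<Rightarrow> ('s,'x) hterm" where
  "hext L j = (if 1 \<le> j \<and> j \<le> length L then L ! (j-1) else Var j)"

definition canon :: "('s,'x) hterm list \<Rightarrow> bool" where
  "canon L \<longleftrightarrow> (L \<noteq> [] \<longrightarrow> last L \<noteq> Var (length L))"

lemma hext_butlast:
  assumes "L \<noteq> []" "last L = Var (length L)" shows "hext (butlast L) = hext L"
proof (rule ext)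
  fix j
  show "hext (butlast L) j = hext L j" using assms
    by (cases "j = length L") (auto simp: hext_def nth_butlast last_conv_nth)
qed

lemma strip_props: "set (strip L) \<subseteq> set L \<and> canon (strip L) \<and> hext (strip L) = hext L"
proof (induction L rule: strip.induct)
  case (1 ts)
  show ?case
  proof (cases "ts \<noteq> [] \<and> last ts = Var (length ts)")
    case True
    hence s: "strip ts = strip (butlast ts)" by (subst strip.simps) simp
    have "set (butlast ts) \<subseteq> set ts" by (meson in_set_butlastD subsetI)
    thus ?thesis using 1 True hext_butlast[of ts] s by auto
  next
    case False
    hence "strip ts = ts" by (subst strip.simps) auto
    thus ?thesis using False by (auto simp: canon_def)
  qed
qed

lemma canon_strip: "canon L \<Longrightarrow> strip L = L"
  by (subst strip.simps) (auto simp: canon_def)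

lemma canon_eq:
  assumes "canon L1" "canon L2" "hext L1 = hext L2" shows "L1 = L2"
proof -
  have key: False if c1: "canon A" and c2: "canon B" and h: "hext A = hext B"
    and l: "length A < length B" for A B :: "('s,'x) hterm list"
  proof -
    have ne: "B \<noteq> []" using l by auto
    have "hext B (length B) = last B" using ne by (simp add: hext_def last_conv_nth Suc_le_eq)
    moreover have "hext A (length B) = Var (length B)" using l by (simp add: hext_def)
    ultimately show False using c2 h ne by (simp add: canon_def)
  qed
  have len: "length L1 = length L2"
    using key[OF assms] key[OF assms(2,1) assms(3)[symmetric]] by (meson linorder_neqE_nat)
  show ?thesis
  proof (rule nth_equalityI)
    show "length L1 = length L2" by (rule len)
    fix i assume i: "i < length L1"
    have "hext L1 (Suc i) = hext L2 (Suc i)" using assms(3) by simp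
    thus "L1 ! i = L2 ! i" using i len by (simp add: hext_def)
  qed
qed

lemma strip_eq: "hext L1 = hext L2 \<Longrightarrow> strip L1 = strip L2"
  using canon_eq[of "strip L1" "strip L2"] strip_props[of L1] strip_props[of L2] by simp

lemma hext_tqM: "hext (map (\<lambda>t. tq t us) ts @ drop (length ts) us) j = tq (hext ts j) us"
  by (auto simp: hext_def nth_append)

lemma tq_Op_hext: "(\<And>j. hext L j = tq (hext ts j) us) \<Longrightarrow> tq (Op w ts) us = Op w (strip L)"
proof -
  assume a: "\<And>j. hext L j = tq (hext ts j) us"
  have "hext (map (\<lambda>t. tq t us) ts @ drop (length ts) us) = hext L"
    by (rule ext) (simp only: a hext_tqM)
  hence "strip (map (\<lambda>t. tq t us) ts @ drop (length ts) us) = strip L" by (rule strip_eq)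
  thus ?thesis by (simp only: tq.simps)
qed

lemma hext_cases: "hext ts j \<in> set ts \<or> hext ts j = Var j"
  by (auto simp: hext_def)

lemma tqVarId: "1 \<le> j \<Longrightarrow> j \<le> n \<Longrightarrow> tq (Var j) (map Var [1..<n+1]) = Var j"
  by (simp add: nth_upt)

lemma tqVarId2: "tq (Var j) (map Var [1..<n+1]) = Var j"
  using tqVarId[of j n] by (cases "1 \<le> j \<and> j \<le> n") auto

lemma C3: "hwf tau X x \<Longrightarrow> tq x (map Var [1..<n+1]) = x"
proof (induction x)
  case (Var i) thus ?case by (simp del: upt_Suc)
next
  case (Op w ts)
  have "\<And>j. hext ts j = tq (hext ts j) (map Var [1..<n+1])"
  proof -
    fix j show "hext ts j = tq (hext ts j) (map Var [1..<n+1])"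
    proof (cases "hext ts j \<in> set ts")
      case True thus ?thesis using Op by auto
    next
      case False hence "hext ts j = Var j" using hext_cases by metis
      thus ?thesis by (metis tqVarId2)
    qed
  qed
  hence "tq (Op w ts) (map Var [1..<n+1]) = Op w (strip ts)" by (rule tq_Op_hext)
  moreover have "canon ts" using Op.prems by (simp add: canon_def)
  ultimately show ?case by (simp add: canon_strip)
qed

lemma C4_Var: "tq (Var i) ys = tq (Var i) (ys @ map Var [length ys+1..<k+1])"
  by (auto simp: nth_append)

lemma C4: "tq x ys = tq x (ys @ map Var [length ys+1..<k+1])"
proof (induction x)
  case (Var i) show ?case by (rule C4_Var)
next
  case (Op w ts)
  let ?M = "map (\<lambda>t. tq t ys) ts @ drop (length ts) ys"
  have "\<And>j. hext ?M j = tq (hext ts j) (ys @ map Var [length ys+1..<k+1])"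
    using hext_cases Op C4_Var by (metis hext_tqM)
  hence "tq (Op w ts) (ys @ map Var [length ys+1..<k+1]) = Op w (strip ?M)" by (rule tq_Op_hext)
  thus ?case by simp
qed

lemma C5_Var: "length ys = length zs \<Longrightarrow>
   tq (tq (Var i) ys) zs = tq (Var i) (map (\<lambda>y. tq y zs) ys)"
  by auto

lemma C5: "length ys = length zs \<Longrightarrow> tq (tq x ys) zs = tq x (map (\<lambda>y. tq y zs) ys)"
proof (induction x)
  case (Var i) thus ?case by (rule C5_Var)
next
  case (Op w ts)
  let ?M1 = "map (\<lambda>t. tq t ys) ts @ drop (length ts) ys"
  let ?M2 = "map (\<lambda>t. tq t zs) (strip ?M1) @ drop (length (strip ?M1)) zs"
  have a: "tq (tq (Op w ts) ys) zs = Op w (strip ?M2)" by simp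
  have "\<And>j. hext ?M2 j = tq (hext ts j) (map (\<lambda>y. tq y zs) ys)"
  proof -
    fix j
    have "hext ?M2 j = tq (hext (strip ?M1) j) zs" by (rule hext_tqM)
    also have "\<dots> = tq (hext ?M1 j) zs" using strip_props[of ?M1] by simp
    also have "\<dots> = tq (tq (hext ts j) ys) zs" by (simp add: hext_tqM)
    also have "\<dots> = tq (hext ts j) (map (\<lambda>y. tq y zs) ys)"
      using hext_cases[of ts j] Op C5_Var by metis
    finally show "hext ?M2 j = tq (hext ts j) (map (\<lambda>y. tq y zs) ys)" .
  qed
  hence "tq (Op w ts) (map (\<lambda>y. tq y zs) ys) = Op w (strip ?M2)" by (rule tq_Op_hext)
  thus ?case using a by simp
qed

lemma closure: "hwf tau X x \<Longrightarrow> \<forall>y\<in>set ys. hwf tau X y \<Longrightarrow> hwf tau X (tq x ys)"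
proof (induction x)
  case (Var i) thus ?case by auto
next
  case (Op w ts)
  let ?M = "map (\<lambda>t. tq t ys) ts @ drop (length ts) ys"
  have "\<forall>t\<in>set ?M. hwf tau X t" using Op by (auto dest: in_set_dropD)
  hence "\<forall>t\<in>set (strip ?M). hwf tau X t" using strip_props[of ?M] by blast
  moreover have "canon (strip ?M)" using strip_props[of ?M] by blast
  ultimately show ?case using Op.prems by (simp add: canon_def)
qed

fun hh :: "('s \<Rightarrow> 'a) \<Rightarrow> ('x \<Rightarrow> 'a) \<Rightarrow> ('a \<Rightarrow> 'a list \<Rightarrow> 'a) \<Rightarrow> (nat \<Rightarrow> 'a)
   \<Rightarrow> ('s, 'x) hterm \<Rightarrow> 'a" where
  "hh sg \<alpha> q e (Var i) = e i"
| "hh sg \<alpha> q e (Op w ts) = q (case w of Inl s \<Rightarrow> sg s | Inr x \<Rightarrow> \<alpha> x) (map (hh sg \<alpha> q e) ts)"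

locale calg =
  fixes tau :: "'s set" and C :: "'a set" and q e sg
  assumes ca: "clone_alg tau C q e sg"
begin

lemma e_in: "1 \<le> i \<Longrightarrow> e i \<in> C" using ca by (simp add: clone_alg_def)
lemma sg_in: "s \<in> tau \<Longrightarrow> sg s \<in> C" using ca by (simp add: clone_alg_def)
lemma q_in: "x \<in> C \<Longrightarrow> ys \<in> lists C \<Longrightarrow> q x ys \<in> C" using ca by (simp add: clone_alg_def)
lemma c1: "xs \<in> lists C \<Longrightarrow> 1 \<le> i \<Longrightarrow> i \<le> length xs \<Longrightarrow> q (e i) xs = xs ! (i - 1)"
  using ca by (simp add: clone_alg_def)
lemma c2: "xs \<in> lists C \<Longrightarrow> j > length xs \<Longrightarrow> q (e j) xs = e j"
  using ca unfolding clone_alg_def by blast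
lemma c3: "x \<in> C \<Longrightarrow> q x (map e [1..<n+1]) = x"
  using ca unfolding clone_alg_def by blast
lemma c4: "x \<in> C \<Longrightarrow> ys \<in> lists C \<Longrightarrow> k > length ys \<Longrightarrow>
        q x ys = q x (ys @ map e [length ys + 1..<k+1])"
  using ca unfolding clone_alg_def by blast
lemma c5: "x \<in> C \<Longrightarrow> ys \<in> lists C \<Longrightarrow> zs \<in> lists C \<Longrightarrow> length ys = length zs \<Longrightarrow>
        q (q x ys) zs = q x (map (\<lambda>y. q y zs) ys)"
  using ca unfolding clone_alg_def by blast

lemma q_nil: "x \<in> C \<Longrightarrow> q x [] = x"
  using c3[of x 0] by simp

definition E :: "'a list \<Rightarrow> nat \<Rightarrow> 'a" where
  "E L j = (if 1 \<le> j \<and> j \<le> length L then L ! (j-1) else e j)"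

definition pad :: "'a list \<Rightarrow> nat \<Rightarrow> 'a list" where
  "pad L N = L @ map e [length L + 1..<N+1]"

lemma pad_q: "x \<in> C \<Longrightarrow> L \<in> lists C \<Longrightarrow> length L \<le> N \<Longrightarrow> q x L = q x (pad L N)"
  unfolding pad_def
  apply (cases "length L = N")
   apply simp
  apply (rule c4)
    apply auto
  done

lemma pad_lists: "L \<in> lists C \<Longrightarrow> pad L N \<in> lists C"
  unfolding pad_def using e_in by auto

lemma pad_len: "length L \<le> N \<Longrightarrow> length (pad L N) = N"
  unfolding pad_def by simp

lemma pad_E: "length L \<le> N \<Longrightarrow> E (pad L N) = E L"
proof (rule ext)
  fix j assume "length L \<le> N"
  thus "E (pad L N) j = E L j"
    unfolding pad_def E_def by (auto simp: nth_append)
qed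

lemma qE: assumes "x \<in> C" "L1 \<in> lists C" "L2 \<in> lists C" "E L1 = E L2"
  shows "q x L1 = q x L2"
proof -
  define N where "N = max (length L1) (length L2)"
  have l1: "length L1 \<le> N" and l2: "length L2 \<le> N" by (auto simp: N_def)
  have "pad L1 N = pad L2 N"
  proof (rule nth_equalityI)
    show "length (pad L1 N) = length (pad L2 N)" using l1 l2 pad_len by simp
    fix i assume "i < length (pad L1 N)"
    hence i: "i < N" using l1 pad_len by simp
    have "E (pad L1 N) (Suc i) = E (pad L2 N) (Suc i)" using pad_E l1 l2 assms(4) by simp
    thus "pad L1 N ! i = pad L2 N ! i" using i l1 l2 pad_len by (simp add: E_def)
  qed
  thus ?thesis using pad_q[OF assms(1,2) l1] pad_q[OF assms(1,3) l2] by simp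
qed

lemma q_e: "1 \<le> j \<Longrightarrow> L \<in> lists C \<Longrightarrow> q (e j) L = E L j"
  by (auto simp: E_def c1 c2)

context
  fixes X :: "'x set" and \<alpha> :: "'x \<Rightarrow> 'a"
  assumes aC: "\<forall>x\<in>X. \<alpha> x \<in> C"
begin

abbreviation H where "H \<equiv> hh sg \<alpha> q e"

lemma base_in: "w \<in> Inl ` tau \<union> Inr ` X \<Longrightarrow> (case w of Inl s \<Rightarrow> sg s | Inr x \<Rightarrow> \<alpha> x) \<in> C"
  using sg_in aC by auto

lemma hh_in: "hwf tau X t \<Longrightarrow> H t \<in> C"
proof (induction t)
  case (Var i) thus ?case using e_in by simp
next
  case (Op w ts)
  have "map H ts \<in> lists C" using Op by auto
  thus ?case using Op.prems base_in q_in by simp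
qed

lemma hh_lists: "\<forall>y\<in>set ys. hwf tau X y \<Longrightarrow> map H ys \<in> lists C"
  using hh_in by auto

lemma E_map: "E (map H L) j = H (hext L j)"
  by (cases j) (auto simp: E_def hext_def)

lemma hom_Var: "1 \<le> j \<Longrightarrow> \<forall>y\<in>set ys. hwf tau X y \<Longrightarrow> H (tq (Var j) ys) = q (e j) (map H ys)"
proof -
  assume j: "1 \<le> j" and ys: "\<forall>y\<in>set ys. hwf tau X y"
  have "q (e j) (map H ys) = E (map H ys) j" using q_e[OF j hh_lists[OF ys]] .
  also have "\<dots> = H (hext ys j)" by (rule E_map)
  also have "\<dots> = H (tq (Var j) ys)" by (simp add: hext_def)
  finally show ?thesis by simp
qed

lemma hom: "hwf tau X x \<Longrightarrow> \<forall>y\<in>set ys. hwf tau X y \<Longrightarrow> H (tq x ys) = q (H x) (map H ys)"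
proof (induction x)
  case (Var i) thus ?case using hom_Var by simp
next
  case (Op w ts)
  have ys: "\<forall>y\<in>set ys. hwf tau X y" using Op.prems by simp
  define b where "b = (case w of Inl s \<Rightarrow> sg s | Inr x \<Rightarrow> \<alpha> x)"
  have bC: "b \<in> C" unfolding b_def using base_in Op.prems by simp
  define M where "M = map (\<lambda>t. tq t ys) ts @ drop (length ts) ys"
  have tqx: "tq (Op w ts) ys = Op w (strip M)" by (simp add: M_def)
  have wfx: "hwf tau X (Op w (strip M))" using closure[OF Op.prems(1) ys] tqx by simp
  have A: "map H ts \<in> lists C" using hh_lists Op.prems by simp
  have B: "map H ys \<in> lists C" using hh_lists ys by simp
  define N where "N = max (length ts) (length ys)"
  define PA where "PA = pad (map H ts) N"
  define PB where "PB = pad (map H ys) N"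
  have lA: "length (map H ts) \<le> N" and lB: "length (map H ys) \<le> N" by (auto simp: N_def)
  have PA: "PA \<in> lists C" "length PA = N" "E PA = E (map H ts)"
    using pad_lists[OF A] pad_len[OF lA] pad_E[OF lA] by (auto simp: PA_def)
  have PB: "PB \<in> lists C" "length PB = N" "E PB = E (map H ys)"
    using pad_lists[OF B] pad_len[OF lB] pad_E[OF lB] by (auto simp: PB_def)
  have qbPA: "q b PA \<in> C" using q_in bC PA by simp
  have 1: "q b (map H ts) = q b PA" using pad_q[OF bC A lA] by (simp add: PA_def)
  have 2: "q (q b PA) (map H ys) = q (q b PA) PB" using pad_q[OF qbPA B lB] by (simp add: PB_def)
  have 3: "q (q b PA) PB = q b (map (\<lambda>p. q p PB) PA)" using c5[OF bC PA(1) PB(1)] PA PB by simp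
  have smC: "map H (strip M) \<in> lists C" using hh_lists wfx by simp
  have mC: "map (\<lambda>p. q p PB) PA \<in> lists C"
  proof -
    { fix p assume "p \<in> set PA"
      hence "p \<in> C" using PA(1) by (simp add: in_lists_conv_set)
      hence "q p PB \<in> C" using q_in PB(1) by blast }
    thus ?thesis by auto
  qed
  have "E (map H (strip M)) = E (map (\<lambda>p. q p PB) PA)"
  proof (rule ext)
    fix j
    have "E (map H (strip M)) j = H (hext (strip M) j)" by (rule E_map)
    also have "\<dots> = H (hext M j)" using strip_props[of M] by simp
    also have "\<dots> = H (tq (hext ts j) ys)" by (simp add: M_def hext_tqM)
    finally have L: "E (map H (strip M)) j = H (tq (hext ts j) ys)" .
    show "E (map H (strip M)) j = E (map (\<lambda>p. q p PB) PA) j"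
    proof (cases "1 \<le> j \<and> j \<le> N")
      case True
      have "E (map (\<lambda>p. q p PB) PA) j = q (PA ! (j-1)) PB" using True PA by (cases j) (auto simp: E_def)
      also have "PA ! (j-1) = E PA j" using True PA(2) by (simp add: E_def)
      also have "\<dots> = H (hext ts j)" using PA E_map by simp
      finally have R: "E (map (\<lambda>p. q p PB) PA) j = q (H (hext ts j)) PB" .
      have wfh: "hwf tau X (hext ts j)" using hext_cases[of ts j] Op.prems True by auto
      have "q (H (hext ts j)) PB = q (H (hext ts j)) (map H ys)"
        using qE[OF hh_in[OF wfh] PB(1) B PB(3)] .
      also have "\<dots> = H (tq (hext ts j) ys)"
      proof (cases "hext ts j \<in> set ts")
        case True thus ?thesis using Op.IH[OF True] wfh ys by simp
      next
        case False
        hence "hext ts j = Var j" using hext_cases by metis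
        thus ?thesis using hom_Var ys True by simp
      qed
      finally show ?thesis using L R by simp
    next
      case False
      hence "hext ts j = Var j" "tq (Var j) ys = Var j" by (auto simp: hext_def N_def)
      moreover have "E (map (\<lambda>p. q p PB) PA) j = e j" using False PA by (auto simp: E_def)
      ultimately show ?thesis using L by simp
    qed
  qed
  hence 4: "q b (map H (strip M)) = q b (map (\<lambda>p. q p PB) PA)" using qE[OF bC smC mC] by simp
  have "H (tq (Op w ts) ys) = q b (map H (strip M))" using tqx by (simp add: b_def)
  also have "\<dots> = q (q b (map H ts)) (map H ys)" using 1 2 3 4 by simp
  also have "\<dots> = q (H (Op w ts)) (map H ys)" by (simp add: b_def)
  finally show ?case .
qed

end
end

lemma uniq:
  assumes hom: "clone_hom tau (hterms tau X) tq te tsg C q e sg h'"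
    and gen: "\<forall>x\<in>X. h' (tgen x) = \<alpha> x"
  shows "hwf tau X t \<Longrightarrow> h' t = hh sg \<alpha> q e t"
proof (induction t)
  case (Var i)
  thus ?case using hom by (auto simp: clone_hom_def te_def)
next
  case (Op w ts)
  have c: "canon ts" using Op.prems by (simp add: canon_def)
  have eq: "Op w ts = tq (Op w []) ts" using canon_strip[OF c] by simp
  have w: "w \<in> Inl ` tau \<union> Inr ` X" using Op.prems by simp
  have "Op w [] \<in> hterms tau X" "ts \<in> lists (hterms tau X)"
    using Op.prems w by (auto simp: hterms_def)
  hence "h' (Op w ts) = q (h' (Op w [])) (map h' ts)"
    using hom eq unfolding clone_hom_def by metis
  moreover have "h' (Op w []) = (case w of Inl s \<Rightarrow> sg s | Inr x \<Rightarrow> \<alpha> x)"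
    using w hom gen by (auto simp: clone_hom_def tsg_def tgen_def)
  moreover have "map h' ts = map (hh sg \<alpha> q e) ts" using Op by auto
  ultimately show ?case by simp
qed

theorem mainTheorem1:
  fixes tau :: "'s set" and X :: "'x set"
  shows "clone_alg tau (hterms tau X) tq te tsg \<and>
    (\<forall>(C :: 'a set) q e sg (\<alpha> :: 'x \<Rightarrow> 'a).
       clone_alg tau C q e sg \<and> (\<forall>x\<in>X. \<alpha> x \<in> C) \<longrightarrow>
       (\<exists>h. clone_hom tau (hterms tau X) tq te tsg C q e sg h \<and> (\<forall>x\<in>X. h (tgen x) = \<alpha> x) \<and>
          (\<forall>h'. clone_hom tau (hterms tau X) tq te tsg C q e sg h' \<and> (\<forall>x\<in>X. h' (tgen x) = \<alpha> x)
               \<longrightarrow> (\<forall>t\<in>hterms tau X. h' t = h t))))"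
proof (intro conjI allI impI)
  have teV: "te = Var" by (rule ext) (simp add: te_def)
  show "clone_alg tau (hterms tau X) tq te tsg"
    unfolding clone_alg_def teV hterms_def
    using closure C3 C4 C5 by (auto simp: tsg_def)
next
  fix C :: "'a set" and q e sg and \<alpha> :: "'x \<Rightarrow> 'a"
  assume a: "clone_alg tau C q e sg \<and> (\<forall>x\<in>X. \<alpha> x \<in> C)"
  interpret calg tau C q e sg using a by (simp add: calg_def)
  have aC: "\<forall>x\<in>X. \<alpha> x \<in> C" using a by simp
  have h1: "clone_hom tau (hterms tau X) tq te tsg C q e sg (hh sg \<alpha> q e)"
    unfolding clone_hom_def
  proof (intro conjI ballI allI impI)
    fix x assume "x \<in> hterms tau X"
    thus "hh sg \<alpha> q e x \<in> C" using hh_in[OF aC] by (simp add: hterms_def)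
  next
    fix x ys assume "x \<in> hterms tau X" "ys \<in> lists (hterms tau X)"
    thus "hh sg \<alpha> q e (tq x ys) = q (hh sg \<alpha> q e x) (map (hh sg \<alpha> q e) ys)"
      using hom[OF aC] by (auto simp: hterms_def)
  next
    fix i :: nat assume "1 \<le> i" thus "hh sg \<alpha> q e (te i) = e i" by (simp add: te_def)
  next
    fix s assume "s \<in> tau" thus "hh sg \<alpha> q e (tsg s) = sg s" by (simp add: tsg_def q_nil sg_in)
  qed
  have h2: "\<forall>x\<in>X. hh sg \<alpha> q e (tgen x) = \<alpha> x" using aC by (simp add: tgen_def q_nil)
  show "\<exists>h. clone_hom tau (hterms tau X) tq te tsg C q e sg h \<and> (\<forall>x\<in>X. h (tgen x) = \<alpha> x) \<and>
          (\<forall>h'. clone_hom tau (hterms tau X) tq te tsg C q e sg h' \<and> (\<forall>x\<in>X. h' (tgen x) = \<alpha> x)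
               \<longrightarrow> (\<forall>t\<in>hterms tau X. h' t = h t))"
  proof (rule exI[of _ "hh sg \<alpha> q e"], intro conjI allI impI ballI)
    show "clone_hom tau (hterms tau X) tq te tsg C q e sg (hh sg \<alpha> q e)" by (rule h1)
  next
    fix x assume "x \<in> X" thus "hh sg \<alpha> q e (tgen x) = \<alpha> x" using h2 by simp
  next
    fix h' t
    assume h': "clone_hom tau (hterms tau X) tq te tsg C q e sg h' \<and> (\<forall>x\<in>X. h' (tgen x) = \<alpha> x)"
      and t: "t \<in> hterms tau X"
    show "h' t = hh sg \<alpha> q e t"
      using uniq[OF conjunct1[OF h'] conjunct2[OF h']] t by (simp add: hterms_def)
  qed
qed

end
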